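(* Assume the standing assumptions and let $\rho,\kappa>0$. Then $\theta_{\rho,\kappa}$ has a unique minimizer $p_{DS}^*$ on $\mathbb{R}^m$, and if $p^*$ is any minimizer of $\theta$ on $\mathbb{R}^m$ (i.e. an optimal solution of $(D)$), then $$\|p_{DS}^*\|^2\le \|p^*\|^2+\frac{2\rho}{\kappa}D_f .$$ In particular, if $\|p^*\|\le R$ for some $R>0$, $D_f>0$, and $\rho=\frac{\epsilon}{3D_f}$, $\kappa=\frac{2\epsilon}{3R^2}$ for some $\epsilon>0$, then $\|p_{DS}^*\|\le\sqrt2\,R$.
   Context: Standing assumptions: $\mathcal{H}$ is a real Hilbert space; $f:\mathcal{H}\to\mathbb{R}\cup\{+\infty\}$ is proper, convex, lower semicontinuous with bounded effective domain; $g:\mathbb{R}^m\to\mathbb{R}\cup\{+\infty\}$ is proper, lower semicontinuous and $\mu$-strongly convex for some $\mu>0$; $A:\mathcal{H}\to\mathbb{R}^m$ is linear and continuous with $A(\operatorname{dom} f)\cap\operatorname{dom} g\neq\emptyset$. $D_f:=\sup\{\tfrac12\|x\|^2:x\in\operatorname{dom} f\}$. $\theta(p):=f^*(A^*p)+g^*(-p)$ (Fenchel conjugates, $A^*$ adjoint). For $\rho>0$, $f_\rho^*(q):=\sup_{x\in\mathcal{H}}\{\langle q,x\rangle-f(x)-\frac\rho2\|x\|^2\}$, $\theta_\rho(p):=f_\rho^*(A^*p)+g^*(-p)$ and $\theta_{\rho,\kappa}(p):=\theta_\rho(p)+\frac\kappa2\|p\|^2$. *)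

theory Defs
  imports "HOL-Analysis.Analysis"
begin

text \<open>Extended-valued functions into \<real> \<union> {+\<infinity>} are modelled as functions into ereal;
  properness excludes the value -\<infinity>.\<close>

definition proper_fun :: "('a \<Rightarrow> ereal) \<Rightarrow> bool" where
  "proper_fun f \<longleftrightarrow> (\<forall>x. f x \<noteq> -\<infinity>) \<and> (\<exists>x. f x \<noteq> \<infinity>)"

definition edom :: "('a \<Rightarrow> ereal) \<Rightarrow> 'a set" where
  "edom f = {x. f x < \<infinity>}"

definition convex_efun :: "('a::real_vector \<Rightarrow> ereal) \<Rightarrow> bool" where
  "convex_efun f \<longleftrightarrow> (\<forall>x y t. 0 \<le> t \<and> t \<le> 1 \<longrightarrow>
     f (t *\<^sub>R x + (1 - t) *\<^sub>R y) \<le> ereal t * f x + ereal (1 - t) * f y)"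

definition lsc_efun :: "('a::topological_space \<Rightarrow> ereal) \<Rightarrow> bool" where
  "lsc_efun f \<longleftrightarrow> (\<forall>x. f x \<le> Liminf (at x) f)"

definition strongly_convex_efun :: "real \<Rightarrow> ('a::real_normed_vector \<Rightarrow> ereal) \<Rightarrow> bool" where
  "strongly_convex_efun \<mu> g \<longleftrightarrow> convex_efun (\<lambda>x. g x - ereal (\<mu> / 2 * (norm x)\<^sup>2))"

definition fconj :: "('a::real_inner \<Rightarrow> ereal) \<Rightarrow> 'a \<Rightarrow> ereal" where
  "fconj f y = (SUP x. ereal (y \<bullet> x) - f x)"

definition Dconst :: "('a::real_normed_vector \<Rightarrow> ereal) \<Rightarrow> real" where
  "Dconst f = (SUP x\<in>edom f. (norm x)\<^sup>2 / 2)"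

text \<open>f^*(A^* p) written out: \<langle>A^* p, x\<rangle> = \<langle>p, A x\<rangle>\<close>
definition theta :: "('a::real_inner \<Rightarrow> ereal) \<Rightarrow> ('b::real_inner \<Rightarrow> ereal) \<Rightarrow> ('a \<Rightarrow> 'b) \<Rightarrow> 'b \<Rightarrow> ereal" where
  "theta f g A p = (SUP x. ereal (p \<bullet> A x) - f x) + fconj g (- p)"

definition theta_rho :: "real \<Rightarrow> ('a::real_inner \<Rightarrow> ereal) \<Rightarrow> ('b::real_inner \<Rightarrow> ereal) \<Rightarrow> ('a \<Rightarrow> 'b) \<Rightarrow> 'b \<Rightarrow> ereal" where
  "theta_rho \<rho> f g A p = (SUP x. ereal (p \<bullet> A x) - f x - ereal (\<rho> / 2 * (norm x)\<^sup>2)) + fconj g (- p)"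

definition theta_rho_kappa :: "real \<Rightarrow> real \<Rightarrow> ('a::real_inner \<Rightarrow> ereal) \<Rightarrow> ('b::real_inner \<Rightarrow> ereal) \<Rightarrow> ('a \<Rightarrow> 'b) \<Rightarrow> 'b \<Rightarrow> ereal" where
  "theta_rho_kappa \<rho> \<kappa> f g A p = theta_rho \<rho> f g A p + ereal (\<kappa> / 2 * (norm p)\<^sup>2)"

definition is_minimizer :: "('b \<Rightarrow> ereal) \<Rightarrow> 'b \<Rightarrow> bool" where
  "is_minimizer h p \<longleftrightarrow> (\<forall>q. h p \<le> h q)"

end

theory Submission
  imports Defs
begin

lemma lsc_closed_level:
  fixes f :: "'a::topological_space \<Rightarrow> ereal"
  assumes "lsc_efun f"
  shows "closed {x. f x \<le> ereal c}"
proof -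
  have "open {x. ereal c < f x}"
  proof (subst open_subopen, intro ballI)
    fix z assume "z \<in> {x. ereal c < f x}"
    hence zc: "ereal c < f z" by simp
    also have "f z \<le> Liminf (at z) f" using assms unfolding lsc_efun_def by blast
    finally have "\<forall>\<^sub>F x in at z. ereal c < f x" by (rule less_LiminfD)
    then obtain S where S: "open S" "z \<in> S" "\<forall>x\<in>S. x \<noteq> z \<longrightarrow> ereal c < f x"
      unfolding eventually_at_topological by auto
    show "\<exists>T. open T \<and> z \<in> T \<and> T \<subseteq> {x. ereal c < f x}"
      using S zc by (intro exI[of _ S]) auto
  qed
  moreover have "{x. f x \<le> ereal c} = - {x. ereal c < f x}" by (auto simp: not_less)
  ultimately show ?thesis by (simp add: closed_def)
qed

lemma norm_convex_comb_sq:
  fixes y w :: "'a::real_inner"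
  shows "(norm (t *\<^sub>R y + (1 - t) *\<^sub>R w))\<^sup>2 = t * (norm y)\<^sup>2 + (1 - t) * (norm w)\<^sup>2 - t * (1 - t) * (norm (y - w))\<^sup>2"
  unfolding power2_norm_eq_inner by (simp add: inner_add_left inner_add_right inner_diff_left inner_diff_right inner_commute algebra_simps)

lemma hilbert_bdd_below:
  fixes f :: "'a::{real_inner,complete_space} \<Rightarrow> ereal"
  assumes nm: "\<And>x. f x \<noteq> -\<infinity>"
  and cl: "\<And>c::real. closed {x. f x \<le> ereal c}"
  and mid: "\<And>x y c. f x \<le> ereal c \<Longrightarrow> f y \<le> ereal c \<Longrightarrow> f ((1/2) *\<^sub>R (x + y)) \<le> ereal c"
  and bd: "\<And>x. f x \<noteq> \<infinity> \<Longrightarrow> norm x \<le> B"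
  shows "\<exists>b. \<forall>x. ereal b \<le> f x"
proof (rule ccontr)
  assume H: "\<not> ?thesis"
  define L where "L n = {x. f x \<le> ereal (- real n)}" for n :: nat
  have Lne: "L n \<noteq> {}" for n
  proof -
    from H obtain x where "\<not> ereal (- real n) \<le> f x" by blast
    hence "x \<in> L n" unfolding L_def by (simp add: not_le less_imp_le)
    thus ?thesis by blast
  qed
  have Lmono: "n \<le> m \<Longrightarrow> L m \<subseteq> L n" for n m
    unfolding L_def by (auto elim: order_trans)
  have Lbd: "x \<in> L n \<Longrightarrow> norm x \<le> B" for x n
    unfolding L_def by (intro bd) auto
  have Lmid: "x \<in> L n \<Longrightarrow> y \<in> L n \<Longrightarrow> (1/2) *\<^sub>R (x + y) \<in> L n" for x y n
    unfolding L_def using mid by auto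
  define \<delta> where "\<delta> n = Inf (norm ` L n)" for n
  have bb: "bdd_below (norm ` L n)" for n by (rule bdd_belowI[of _ 0]) auto
  have \<delta>le: "x \<in> L n \<Longrightarrow> \<delta> n \<le> norm x" for x n
    unfolding \<delta>_def by (rule cInf_lower) (use bb in auto)
  have \<delta>0: "0 \<le> \<delta> n" for n
    unfolding \<delta>_def using Lne by (intro cInf_greatest) auto
  have \<delta>B: "\<delta> n \<le> B" for n
  proof -
    obtain x where "x \<in> L n" using Lne by blast
    thus ?thesis using \<delta>le[of x n] Lbd[of x n] by linarith
  qed
  have \<delta>mono: "incseq \<delta>"
  proof (rule incseq_SucI)
    fix n show "\<delta> n \<le> \<delta> (Suc n)"
      unfolding \<delta>_def using Lne[of "Suc n"] bb[of n] Lmono[of n "Suc n"]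
      by (intro cInf_mono) auto
  qed
  have exx: "\<exists>x. x \<in> L n \<and> (norm x)\<^sup>2 \<le> (\<delta> n)\<^sup>2 + 1 / (real n + 1)" for n
  proof -
    have "\<delta> n < sqrt ((\<delta> n)\<^sup>2 + 1 / (real n + 1))"
      using \<delta>0[of n] by (intro real_less_rsqrt) auto
    then obtain v where "v \<in> norm ` L n" "v < sqrt ((\<delta> n)\<^sup>2 + 1 / (real n + 1))"
      using cInf_lessD[of "norm ` L n" "sqrt ((\<delta> n)\<^sup>2 + 1 / (real n + 1))"] Lne[of n] unfolding \<delta>_def by auto
    then obtain x where x: "x \<in> L n" "norm x < sqrt ((\<delta> n)\<^sup>2 + 1 / (real n + 1))" by auto
    hence "(norm x)\<^sup>2 < (\<delta> n)\<^sup>2 + 1 / (real n + 1)"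
    proof -
      have "(norm x)\<^sup>2 < (sqrt ((\<delta> n)\<^sup>2 + 1 / (real n + 1)))\<^sup>2"
        using x(2) by (intro power_strict_mono) auto
      also have "\<dots> = (\<delta> n)\<^sup>2 + 1 / (real n + 1)" by (intro real_sqrt_pow2) auto
      finally show ?thesis .
    qed
    thus ?thesis using x by (auto intro: less_imp_le)
  qed
  then obtain x where x: "\<And>n. x n \<in> L n" "\<And>n. (norm (x n))\<^sup>2 \<le> (\<delta> n)\<^sup>2 + 1 / (real n + 1)"
    by metis
  define \<Delta> where "\<Delta> = Sup (range \<delta>)"
  have bda: "bdd_above (range \<delta>)" using \<delta>B by (intro bdd_aboveI[of _ B]) auto
  have \<delta>lim: "\<delta> \<longlonglongrightarrow> \<Delta>" unfolding \<Delta>_def using bda \<delta>mono by (rule LIMSEQ_incseq_SUP)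
  have \<delta>\<Delta>: "\<delta> n \<le> \<Delta>" for n unfolding \<Delta>_def using bda by (intro cSUP_upper) auto
  have key: "(norm (x n - x m))\<^sup>2 \<le> 2 * (\<Delta>\<^sup>2 - (\<delta> n)\<^sup>2) + 4 / (real n + 1)" if "n \<le> m" for n m
  proof -
    have xm: "x m \<in> L n" using x(1)[of m] Lmono[OF that] by blast
    have "\<delta> n \<le> norm ((1/2) *\<^sub>R (x n + x m))" by (rule \<delta>le, rule Lmid[OF x(1) xm])
    hence "(\<delta> n)\<^sup>2 \<le> (norm ((1/2) *\<^sub>R (x n + x m)))\<^sup>2" using \<delta>0[of n] by (intro power_mono) auto
    hence A: "4 * (\<delta> n)\<^sup>2 \<le> (norm (x n + x m))\<^sup>2" by (simp add: power_divide)
    have P: "(norm (x n - x m))\<^sup>2 + (norm (x n + x m))\<^sup>2 = 2 * (norm (x n))\<^sup>2 + 2 * (norm (x m))\<^sup>2"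
      unfolding power2_norm_eq_inner by (simp add: inner_add_left inner_add_right inner_diff_left inner_diff_right inner_commute algebra_simps)
    have "(\<delta> m)\<^sup>2 \<le> \<Delta>\<^sup>2" using \<delta>0[of m] \<delta>\<Delta>[of m] by (intro power_mono) auto
    moreover have "1 / (real m + 1) \<le> 1 / (real n + 1)" using that by (intro divide_left_mono) auto
    moreover have "4 / (real n + 1) = 4 * (1 / (real n + 1))" by simp
    ultimately show ?thesis using A P x(2)[of n] x(2)[of m] by (smt (verit))
  qed
  define e where "e n = 2 * (\<Delta>\<^sup>2 - (\<delta> n)\<^sup>2) + 4 / (real n + 1)" for n
  have elim: "e \<longlonglongrightarrow> 0"
  proof -
    have "(\<lambda>n. 4 * inverse (real (Suc n))) \<longlonglongrightarrow> 4 * (0::real)"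
      by (intro tendsto_intros LIMSEQ_inverse_real_of_nat)
    hence l4: "(\<lambda>n. 4 / (real n + 1)) \<longlonglongrightarrow> (0::real)" by (simp add: divide_inverse add.commute)
    have "(\<lambda>n. 2 * (\<Delta>\<^sup>2 - (\<delta> n)\<^sup>2) + 4 / (real n + 1)) \<longlonglongrightarrow> 2 * (\<Delta>\<^sup>2 - \<Delta>\<^sup>2) + 0"
      by (intro tendsto_intros \<delta>lim l4)
    thus ?thesis unfolding e_def by simp
  qed
  have "Cauchy x"
  proof (rule CauchyI)
    fix r :: real assume r: "0 < r"
    from elim have "\<forall>\<^sub>F n in sequentially. e n < r\<^sup>2" using r by (auto simp: order_tendsto_iff)
    then obtain M where M: "\<And>n. n \<ge> M \<Longrightarrow> e n < r\<^sup>2" by (auto simp: eventually_sequentially)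
    have "norm (x m - x n) < r" if "m \<ge> M" "n \<ge> M" for m n
    proof -
      have "(norm (x m - x n))\<^sup>2 < r\<^sup>2"
      proof (cases "m \<le> n")
        case True thus ?thesis using key[OF True] M[OF that(1)] unfolding e_def by linarith
      next
        case False
        hence nm: "n \<le> m" by simp
        show ?thesis using key[OF nm] M[OF that(2)] unfolding e_def by (simp add: norm_minus_commute)
      qed
      thus ?thesis using r by (simp add: power_less_imp_less_base)
    qed
    thus "\<exists>M. \<forall>m\<ge>M. \<forall>n\<ge>M. norm (x m - x n) < r" by blast
  qed
  then obtain z where z: "x \<longlonglongrightarrow> z" using Cauchy_convergent convergent_def by blast
  have zL: "z \<in> L k" for k
  proof (rule Lim_in_closed_set[OF _ _ _ z])
    show "closed (L k)" unfolding L_def by (rule cl)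
    show "\<forall>\<^sub>F n in sequentially. x n \<in> L k"
      unfolding eventually_sequentially using x(1) Lmono by blast
  qed auto
  obtain k :: nat where k: "- real_of_ereal (f z) < real k" using reals_Archimedean2 by blast
  have "f z \<le> ereal (- real k)" using zL[of k] unfolding L_def by simp
  moreover have "f z \<noteq> \<infinity>" using calculation by auto
  ultimately show False using nm[of z] k by (cases "f z") auto
qed

lemma sc_arith:
  "t*(a - \<mu>/2*Y) + (1-t)*(b - \<mu>/2*W) + \<mu>/2*(t*Y + (1-t)*W - t*(1-t)*D) = t*a + (1-t)*b - \<mu>/2*t*(1-t)*(D::real)"
  by (simp add: field_simps)

lemma r_arith:
  assumes "1 < (r::real)"
  shows "r * (1/r*a + (1-1/r)*g0 - \<mu>/2*(1/r)*(1-1/r)*r\<^sup>2) = a + (r - 1) * g0 - \<mu>/2 * (r - 1) * r"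
  using assms by (simp add: field_simps power2_eq_square)

lemma sc_real:
  fixes g :: "'a::real_inner \<Rightarrow> ereal"
  assumes sc: "strongly_convex_efun \<mu> g" and nm: "\<And>x. g x \<noteq> -\<infinity>"
    and gy: "g y = ereal a" and gw: "g w = ereal b" and t: "0 \<le> t" "t \<le> 1"
  shows "\<exists>c. g (t *\<^sub>R y + (1-t) *\<^sub>R w) = ereal c \<and>
           c \<le> t*a + (1-t)*b - \<mu>/2*t*(1-t)*(norm (y-w))\<^sup>2"
proof -
  define z where "z = t *\<^sub>R y + (1-t) *\<^sub>R w"
  have "g z - ereal (\<mu>/2*(norm z)\<^sup>2) \<le> ereal t * (g y - ereal (\<mu>/2*(norm y)\<^sup>2)) + ereal (1-t) * (g w - ereal (\<mu>/2*(norm w)\<^sup>2))"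
    using sc t unfolding strongly_convex_efun_def convex_efun_def z_def by blast
  hence H: "g z - ereal (\<mu>/2*(norm z)\<^sup>2) \<le> ereal (t*(a - \<mu>/2*(norm y)\<^sup>2) + (1-t)*(b - \<mu>/2*(norm w)\<^sup>2))"
    by (simp add: gy gw)
  obtain c where gz: "g z = ereal c" using H nm[of z] by (cases "g z") auto
  have Hc: "c - \<mu>/2*(norm z)\<^sup>2 \<le> t*(a - \<mu>/2*(norm y)\<^sup>2) + (1-t)*(b - \<mu>/2*(norm w)\<^sup>2)"
    using H by (simp add: gz)
  have Zeq: "(norm z)\<^sup>2 = t * (norm y)\<^sup>2 + (1 - t) * (norm w)\<^sup>2 - t * (1 - t) * (norm (y - w))\<^sup>2"
    unfolding z_def by (rule norm_convex_comb_sq)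
  have "c \<le> t*(a - \<mu>/2*(norm y)\<^sup>2) + (1-t)*(b - \<mu>/2*(norm w)\<^sup>2) + \<mu>/2*(norm z)\<^sup>2"
    using Hc by linarith
  also have "\<dots> = t*a + (1-t)*b - \<mu>/2*t*(1-t)*(norm (y-w))\<^sup>2"
    unfolding Zeq by (rule sc_arith)
  finally have "c \<le> t*a + (1-t)*b - \<mu>/2*t*(1-t)*(norm (y-w))\<^sup>2" .
  thus ?thesis using gz unfolding z_def by blast
qed

lemma g_bdd_below:
  fixes g :: "'a::{real_inner,complete_space} \<Rightarrow> ereal"
  assumes gp: "proper_fun g" and gl: "lsc_efun g" and mu: "\<mu> > 0" and sc: "strongly_convex_efun \<mu> g"
  shows "\<exists>b. \<forall>y. ereal b \<le> g y"
proof -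
  have nm: "\<And>x. g x \<noteq> -\<infinity>" using gp unfolding proper_fun_def by blast
  obtain y0 where "g y0 \<noteq> \<infinity>" using gp unfolding proper_fun_def by blast
  then obtain g0 where g0: "g y0 = ereal g0" using nm[of y0] by (cases "g y0") auto
  have midg: "g ((1/2) *\<^sub>R (x + y)) \<le> ereal c" if gxy: "g x \<le> ereal c" "g y \<le> ereal c" for x y c
  proof -
    obtain a where a: "g x = ereal a" using gxy(1) nm[of x] by (cases "g x") auto
    obtain b where b: "g y = ereal b" using gxy(2) nm[of y] by (cases "g y") auto
    obtain d where d: "g ((1/2) *\<^sub>R x + (1 - 1/2) *\<^sub>R y) = ereal d"
      "d \<le> (1/2)*a + (1-1/2)*b - \<mu>/2*(1/2)*(1-1/2)*(norm (x-y))\<^sup>2"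
      using sc_real[OF sc nm a b, of "1/2"] by auto
    have eq: "(1/2) *\<^sub>R (x + y) = (1/2) *\<^sub>R x + (1 - 1/2) *\<^sub>R y" by (simp add: scaleR_right_distrib)
    have "a \<le> c" "b \<le> c" using gxy a b by auto
    moreover have "0 \<le> \<mu>/2*(1/2)*(1-1/2)*(norm (x-y))\<^sup>2" using mu by simp
    ultimately have "1/2*a + (1-1/2)*b \<le> c" "0 \<le> \<mu>/2*(1/2)*(1-1/2)*(norm (x-y))\<^sup>2" by auto
    hence "d \<le> c" using d(2) by linarith
    thus ?thesis using d(1) eq by simp
  qed
  define g' where "g' y = (if y \<in> cball y0 1 then g y else \<infinity>)" for y
  have "\<exists>b. \<forall>y. ereal b \<le> g' y"
  proof (rule hilbert_bdd_below[where B = "norm y0 + 1"])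
    show "g' x \<noteq> -\<infinity>" for x unfolding g'_def using nm by auto
    show "closed {x. g' x \<le> ereal c}" for c
    proof -
      have "{x. g' x \<le> ereal c} = cball y0 1 \<inter> {x. g x \<le> ereal c}" unfolding g'_def by auto
      thus ?thesis using lsc_closed_level[OF gl] by auto
    qed
    show "g' ((1/2) *\<^sub>R (x + y)) \<le> ereal c" if "g' x \<le> ereal c" "g' y \<le> ereal c" for x y c
    proof -
      have xy: "x \<in> cball y0 1" "y \<in> cball y0 1" "g x \<le> ereal c" "g y \<le> ereal c"
        using that unfolding g'_def by (auto split: if_splits)
      have "(1/2) *\<^sub>R (x + y) \<in> cball y0 1"
      proof -
        have "(1/2) *\<^sub>R (x + y) = (1/2) *\<^sub>R x + (1/2) *\<^sub>R y" by (simp add: scaleR_right_distrib)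
        moreover have "(1/2) *\<^sub>R x + (1/2) *\<^sub>R y \<in> cball y0 1"
          by (rule convexD[OF convex_cball xy(1,2)]) auto
        ultimately show ?thesis by simp
      qed
      thus ?thesis using midg[OF xy(3,4)] unfolding g'_def by simp
    qed
    show "norm x \<le> norm y0 + 1" if "g' x \<noteq> \<infinity>" for x
    proof -
      have "x \<in> cball y0 1" using that unfolding g'_def by (auto split: if_splits)
      hence "norm (x - y0) \<le> 1" by (simp add: dist_norm norm_minus_commute)
      thus ?thesis using norm_triangle_ineq[of "x - y0" y0] by simp
    qed
  qed
  then obtain m1 where m1': "\<And>y. ereal m1 \<le> g' y" by blast
  have m1: "ereal m1 \<le> g y" if "y \<in> cball y0 1" for y using m1'[of y] that unfolding g'_def by simp
  have m1g0: "m1 \<le> g0" using m1[of y0] g0 by simp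
  define R where "R = 1 + 2 * (g0 - m1) / \<mu>"
  have R1: "1 \<le> R" unfolding R_def using m1g0 mu by simp
  have main: "g0 - R * (g0 - m1) \<le> a" if ga: "g y = ereal a" for y a
  proof (cases "norm (y - y0) \<le> 1")
    case True
    hence "m1 \<le> a" using m1[of y] ga by (simp add: dist_norm norm_minus_commute)
    moreover have "g0 - R * (g0 - m1) \<le> m1" using R1 m1g0
    proof -
      have "1 * (g0 - m1) \<le> R * (g0 - m1)" using R1 m1g0 by (intro mult_right_mono) auto
      thus ?thesis by simp
    qed
    ultimately show ?thesis by linarith
  next
    case False
    define r where "r = norm (y - y0)"
    have r1: "1 < r" using False r_def by simp
    define t where "t = 1 / r"
    have t: "0 \<le> t" "t \<le> 1" using r1 unfolding t_def by auto
    obtain c where c: "g (t *\<^sub>R y + (1-t) *\<^sub>R y0) = ereal c"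
      "c \<le> t*a + (1-t)*g0 - \<mu>/2*t*(1-t)*(norm (y-y0))\<^sup>2"
      using sc_real[OF sc nm ga g0 t] by blast
    have e: "t *\<^sub>R y + (1-t) *\<^sub>R y0 - y0 = t *\<^sub>R (y - y0)" by (simp add: algebra_simps)
    have "dist y0 (t *\<^sub>R y + (1-t) *\<^sub>R y0) = norm (t *\<^sub>R y + (1-t) *\<^sub>R y0 - y0)"
      by (simp add: dist_norm norm_minus_commute)
    also have "\<dots> = t * r" unfolding e using t(1) by (simp add: r_def)
    also have "\<dots> = 1" using r1 by (simp add: t_def)
    finally have "dist y0 (t *\<^sub>R y + (1-t) *\<^sub>R y0) = 1" .
    hence "m1 \<le> c" using m1[of "t *\<^sub>R y + (1-t) *\<^sub>R y0"] c(1) by simp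
    hence A: "m1 \<le> t*a + (1-t)*g0 - \<mu>/2*t*(1-t)*r\<^sup>2" using c(2) r_def by simp
    have "r * m1 \<le> r * (t*a + (1-t)*g0 - \<mu>/2*t*(1-t)*r\<^sup>2)" using A r1 by simp
    also have "\<dots> = a + (r - 1) * g0 - \<mu>/2 * (r - 1) * r"
      using r1 unfolding t_def by (rule r_arith)
    finally have B: "r * m1 \<le> a + (r - 1) * g0 - \<mu>/2 * (r - 1) * r" .
    show ?thesis
    proof (cases "r \<le> R")
      case True
      have "0 \<le> \<mu>/2 * (r - 1) * r" using mu r1 by simp
      moreover have "r * (g0 - m1) \<le> R * (g0 - m1)" using True m1g0 by (simp add: mult_right_mono)
      moreover have "r*m1 - (r-1)*g0 = g0 - r*(g0-m1)" by (simp add: algebra_simps)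
      ultimately show ?thesis using B by linarith
    next
      case False
      hence "2 * (g0 - m1) / \<mu> < r - 1" unfolding R_def by simp
      hence "2 * (g0 - m1) < (r - 1) * \<mu>" using mu by (simp add: field_simps)
      hence "r * (2 * (g0 - m1)) \<le> r * ((r - 1) * \<mu>)" using r1 by simp
      hence "r * (g0 - m1) \<le> \<mu>/2 * (r - 1) * r" by (simp add: algebra_simps)
      moreover have "r*m1 - (r-1)*g0 = g0 - r*(g0-m1)" by (simp add: algebra_simps)
      ultimately have "g0 \<le> a" using B by linarith
      moreover have "0 \<le> R * (g0 - m1)" using R1 m1g0 by simp
      ultimately show ?thesis by linarith
    qed
  qed
  show ?thesis
  proof (intro exI allI)
    fix y show "ereal (g0 - R * (g0 - m1)) \<le> g y"
      using main[of y] nm[of y] by (cases "g y") auto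
  qed
qed




lemma quad_lb:
  fixes \<kappa> C r :: real assumes "\<kappa> > 0"
  shows "- C\<^sup>2 / (2*\<kappa>) \<le> \<kappa>/2 * r\<^sup>2 - C * r"
proof -
  have "0 \<le> (\<kappa> * r - C)\<^sup>2 / (2*\<kappa>)" using assms by simp
  also have "\<dots> = \<kappa>/2 * r\<^sup>2 - C * r + C\<^sup>2 / (2*\<kappa>)"
    using assms by (simp add: field_simps power2_eq_square)
  finally show ?thesis by simp
qed

lemma quad_bd:
  fixes \<kappa> C r M :: real assumes k: "\<kappa> > 0" and C: "0 \<le> C" and r: "0 \<le> r"
    and h: "\<kappa>/2 * r\<^sup>2 - C * r \<le> M"
  shows "r \<le> 1 + 2 * (C + \<bar>M\<bar>) / \<kappa>"
proof (rule ccontr)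
  assume "\<not> ?thesis"
  hence r1: "1 + 2 * (C + \<bar>M\<bar>) / \<kappa> < r" by simp
  hence "2 * (C + \<bar>M\<bar>) / \<kappa> < r" by simp
  hence a: "2 * (C + \<bar>M\<bar>) < r * \<kappa>" using k by (simp add: field_simps)
  have r1': "1 \<le> r" using r1 C k by (smt (verit) divide_nonneg_pos)
  have "r * (2 * (C + \<bar>M\<bar>)) < r * (r * \<kappa>)" using a r1' by (intro mult_strict_left_mono) auto
  hence "r * (C + \<bar>M\<bar>) < \<kappa>/2 * r\<^sup>2" by (simp add: power2_eq_square algebra_simps)
  moreover have "\<bar>M\<bar> \<le> r * \<bar>M\<bar>" using r1' by (simp add: mult_le_cancel_right1)
  moreover have "r * (C + \<bar>M\<bar>) = r * C + r * \<bar>M\<bar>" by (simp add: algebra_simps)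
  moreover have "C * r = r * C" by simp
  ultimately show False using h by linarith
qed

theorem mainTheorem4:
  fixes f :: "'h::{real_inner, complete_space} \<Rightarrow> ereal"
    and g :: "real^'m \<Rightarrow> ereal"
    and A :: "'h \<Rightarrow> real^'m"
    and \<mu> \<rho> \<kappa> :: real
  assumes f_proper: "proper_fun f" and f_convex: "convex_efun f" and f_lsc: "lsc_efun f"
    and f_bdd: "bounded (edom f)"
    and g_proper: "proper_fun g" and g_lsc: "lsc_efun g"
    and mu_pos: "\<mu> > 0" and g_sc: "strongly_convex_efun \<mu> g"
    and A_lin: "bounded_linear A"
    and feas: "A ` edom f \<inter> edom g \<noteq> {}"
    and rho_pos: "\<rho> > 0" and kappa_pos: "\<kappa> > 0"
  shows "(\<exists>!p. is_minimizer (theta_rho_kappa \<rho> \<kappa> f g A) p) \<and>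
    (\<forall>pDS. is_minimizer (theta_rho_kappa \<rho> \<kappa> f g A) pDS \<longrightarrow>
       (\<forall>ps. is_minimizer (theta f g A) ps \<longrightarrow>
          (norm pDS)\<^sup>2 \<le> (norm ps)\<^sup>2 + 2 * \<rho> / \<kappa> * Dconst f) \<and>
       (\<forall>ps R \<epsilon>. is_minimizer (theta f g A) ps \<longrightarrow> R > 0 \<longrightarrow> norm ps \<le> R \<longrightarrow>
          Dconst f > 0 \<longrightarrow> \<epsilon> > 0 \<longrightarrow> \<rho> = \<epsilon> / (3 * Dconst f) \<longrightarrow>
          \<kappa> = 2 * \<epsilon> / (3 * R\<^sup>2) \<longrightarrow> norm pDS \<le> sqrt 2 * R))"
proof -
  have fnm: "\<And>x. f x \<noteq> -\<infinity>" using f_proper unfolding proper_fun_def by blast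
  have gnm: "\<And>x. g x \<noteq> -\<infinity>" using g_proper unfolding proper_fun_def by blast
  define Df where "Df = edom f"
  define Dg where "Dg = edom g"
  define fr where "fr x = real_of_ereal (f x)" for x
  define gr where "gr y = real_of_ereal (g y)" for y
  have frD: "f x = ereal (fr x)" if "x \<in> Df" for x
    using that fnm[of x] unfolding Df_def edom_def fr_def by (cases "f x") auto
  have frN: "f x = \<infinity>" if "x \<notin> Df" for x
    using that unfolding Df_def edom_def by auto
  have grD: "g y = ereal (gr y)" if "y \<in> Dg" for y
    using that gnm[of y] unfolding Dg_def edom_def gr_def by (cases "g y") auto
  have grN: "g y = \<infinity>" if "y \<notin> Dg" for y
    using that unfolding Dg_def edom_def by auto
  obtain x0 where x0: "x0 \<in> Df" using f_proper unfolding proper_fun_def Df_def edom_def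
    by (auto simp: less_top)
  obtain y0 where y0: "y0 \<in> Dg" using g_proper unfolding proper_fun_def Dg_def edom_def
    by (auto simp: less_top)
  obtain B where B: "\<And>x. x \<in> Df \<Longrightarrow> norm x \<le> B" using f_bdd unfolding bounded_iff Df_def by blast
  have "\<exists>b. \<forall>x. ereal b \<le> f x"
  proof (rule hilbert_bdd_below[where B = B])
    show "f x \<noteq> -\<infinity>" for x by (rule fnm)
    show "closed {x. f x \<le> ereal c}" for c by (rule lsc_closed_level[OF f_lsc])
    show "f ((1/2) *\<^sub>R (x + y)) \<le> ereal c" if fxy: "f x \<le> ereal c" "f y \<le> ereal c" for x y c
    proof -
      obtain a where a: "f x = ereal a" using fxy(1) fnm[of x] by (cases "f x") auto
      obtain b where b: "f y = ereal b" using fxy(2) fnm[of y] by (cases "f y") auto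
      have "f ((1/2) *\<^sub>R x + (1 - 1/2) *\<^sub>R y) \<le> ereal (1/2) * f x + ereal (1 - 1/2) * f y"
        using f_convex[unfolded convex_efun_def, rule_format, of "1/2" x y] by simp
      also have "\<dots> = ereal (1/2*a + 1/2*b)" by (simp add: a b)
      also have "\<dots> \<le> ereal c" using fxy a b by simp
      finally show ?thesis by (simp add: scaleR_right_distrib)
    qed
    show "norm x \<le> B" if "f x \<noteq> \<infinity>" for x
      using B[of x] that unfolding Df_def edom_def by (simp add: less_top)
  qed
  then obtain cf where cf: "\<And>x. ereal cf \<le> f x" by blast
  have frcf: "cf \<le> fr x" if "x \<in> Df" for x using cf[of x] frD[OF that] by simp
  obtain cg where cg: "\<And>y. ereal cg \<le> g y" using g_bdd_below[OF g_proper g_lsc mu_pos g_sc] by blast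
  have grcg: "cg \<le> gr y" if "y \<in> Dg" for y using cg[of y] grD[OF that] by simp
  obtain K where K: "K > 0" "\<And>x. norm (A x) \<le> norm x * K"
    using bounded_linear.pos_bounded[OF A_lin] by blast
  define Fs where "Fs s p = (SUP x. ereal (p \<bullet> A x) - f x - ereal (s/2*(norm x)\<^sup>2))" for s p
  define \<phi> where "\<phi> s p = real_of_ereal (Fs s p)" for s p
  have TF: "ereal (p \<bullet> A x) - f x - ereal (s/2*(norm x)\<^sup>2) =
      (if x \<in> Df then ereal (p \<bullet> A x - fr x - s/2*(norm x)\<^sup>2) else -\<infinity>)" for p x s
    using frD[of x] frN[of x] by auto
  have Fs_up: "ereal (p \<bullet> A x - fr x - s/2*(norm x)\<^sup>2) \<le> Fs s p" if "x \<in> Df" for x s p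
  proof -
    have "ereal (p \<bullet> A x - fr x - s/2*(norm x)\<^sup>2) = ereal (p \<bullet> A x) - f x - ereal (s/2*(norm x)\<^sup>2)"
      using TF[of p x s] that by simp
    also have "\<dots> \<le> Fs s p" unfolding Fs_def by (rule SUP_upper) simp
    finally show ?thesis .
  qed
  have Fs_least: "Fs s p \<le> ereal c" if "\<And>x. x \<in> Df \<Longrightarrow> p \<bullet> A x - fr x - s/2*(norm x)\<^sup>2 \<le> c" for s p c
    unfolding Fs_def
  proof (rule SUP_least)
    fix x show "ereal (p \<bullet> A x) - f x - ereal (s/2*(norm x)\<^sup>2) \<le> ereal c"
      using TF[of p x s] that[of x] by auto
  qed
  have Fs_fin: "Fs s p = ereal (\<phi> s p)" for s p
  proof -
    have "Fs s p \<le> ereal (norm p * (B * K) + \<bar>s\<bar>/2 * B\<^sup>2 - cf)"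
    proof (rule Fs_least)
      fix x assume x: "x \<in> Df"
      have nx: "norm x \<le> B" "0 \<le> norm x" using B[OF x] by auto
      have "p \<bullet> A x \<le> norm p * norm (A x)" by (rule norm_cauchy_schwarz)
      also have "\<dots> \<le> norm p * (norm x * K)" using K(2)[of x] by (intro mult_left_mono) auto
      also have "\<dots> \<le> norm p * (B * K)" using nx K(1) by (intro mult_left_mono) auto
      finally have 1: "p \<bullet> A x \<le> norm p * (B * K)" .
      have "(norm x)\<^sup>2 \<le> B\<^sup>2" using nx by (intro power_mono) auto
      have "- s * (norm x)\<^sup>2 \<le> \<bar>s\<bar> * (norm x)\<^sup>2" by (intro mult_right_mono) auto
      also have "\<dots> \<le> \<bar>s\<bar> * B\<^sup>2" using \<open>(norm x)\<^sup>2 \<le> B\<^sup>2\<close> by (intro mult_left_mono) auto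
      finally have "- (s/2*(norm x)\<^sup>2) \<le> \<bar>s\<bar>/2 * B\<^sup>2" by simp
      thus "p \<bullet> A x - fr x - s/2*(norm x)\<^sup>2 \<le> norm p * (B * K) + \<bar>s\<bar>/2 * B\<^sup>2 - cf"
        using 1 frcf[OF x] by linarith
    qed
    moreover have "ereal (p \<bullet> A x0 - fr x0 - s/2*(norm x0)\<^sup>2) \<le> Fs s p" by (rule Fs_up[OF x0])
    ultimately have "\<bar>Fs s p\<bar> \<noteq> \<infinity>" by auto
    thus ?thesis unfolding \<phi>_def by (simp add: ereal_real')
  qed
  have \<phi>up: "p \<bullet> A x - fr x - s/2*(norm x)\<^sup>2 \<le> \<phi> s p" if "x \<in> Df" for x s p
    using Fs_up[OF that, of p s] Fs_fin[of s p] by simp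
  have \<phi>least: "\<phi> s p \<le> c" if "\<And>x. x \<in> Df \<Longrightarrow> p \<bullet> A x - fr x - s/2*(norm x)\<^sup>2 \<le> c" for s p c
    using Fs_least[of p s c] that Fs_fin[of s p] by simp
  define G where "G p = fconj g (- p)" for p
  have TG: "ereal ((-p) \<bullet> y) - g y = (if y \<in> Dg then ereal (- (p \<bullet> y) - gr y) else -\<infinity>)" for p y
    using grD[of y] grN[of y] by auto
  have Gup: "ereal (- (p \<bullet> y) - gr y) \<le> G p" if "y \<in> Dg" for y p
  proof -
    have "ereal (- (p \<bullet> y) - gr y) = ereal ((-p) \<bullet> y) - g y"
      using TG[of p y] that by simp
    also have "\<dots> \<le> G p" unfolding G_def fconj_def by (rule SUP_upper) simp
    finally show ?thesis .
  qed
  have Gleast: "G p \<le> ereal c" if "\<And>y. y \<in> Dg \<Longrightarrow> - (p \<bullet> y) - gr y \<le> c" for p c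
    unfolding G_def fconj_def
  proof (rule SUP_least)
    fix y show "ereal ((-p) \<bullet> y) - g y \<le> ereal c" using TG[of p y] that[of y] by auto
  qed
  have Gnm: "G p \<noteq> -\<infinity>" for p using Gup[OF y0, of p] by auto
  have G0: "G 0 \<le> ereal (- cg)" by (rule Gleast) (use grcg in auto)
  define \<Phi> where "\<Phi> = theta_rho_kappa \<rho> \<kappa> f g A"
  have Phi: "\<Phi> p = ereal (\<phi> \<rho> p) + G p + ereal (\<kappa>/2*(norm p)\<^sup>2)" for p
    unfolding \<Phi>_def theta_rho_kappa_def theta_rho_def G_def using Fs_fin[of \<rho> p] unfolding Fs_def by simp
  have Th: "theta f g A p = ereal (\<phi> 0 p) + G p" for p
    unfolding theta_def G_def using Fs_fin[of 0 p] unfolding Fs_def by simp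
  define E where "E x y p = p \<bullet> A x - fr x - \<rho>/2*(norm x)\<^sup>2 - p \<bullet> y - gr y + \<kappa>/2*(norm p)\<^sup>2" for x y p
  have char: "\<Phi> p \<le> ereal c \<longleftrightarrow> (\<forall>x\<in>Df. \<forall>y\<in>Dg. E x y p \<le> c)" for p c
  proof
    assume H: "\<Phi> p \<le> ereal c"
    show "\<forall>x\<in>Df. \<forall>y\<in>Dg. E x y p \<le> c"
    proof (intro ballI)
      fix x y assume x: "x \<in> Df" and y: "y \<in> Dg"
      have "ereal (E x y p) = ereal (p \<bullet> A x - fr x - \<rho>/2*(norm x)\<^sup>2) + ereal (- (p \<bullet> y) - gr y) + ereal (\<kappa>/2*(norm p)\<^sup>2)"
        by (simp add: E_def)
      also have "\<dots> \<le> ereal (\<phi> \<rho> p) + G p + ereal (\<kappa>/2*(norm p)\<^sup>2)"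
        using \<phi>up[OF x, of p \<rho>] Gup[OF y, of p] by (intro add_mono) auto
      also have "\<dots> \<le> ereal c" using H Phi[of p] by simp
      finally show "E x y p \<le> c" by simp
    qed
  next
    assume H: "\<forall>x\<in>Df. \<forall>y\<in>Dg. E x y p \<le> c"
    have "G p \<le> ereal (c - \<kappa>/2*(norm p)\<^sup>2 - \<phi> \<rho> p)"
    proof (rule Gleast)
      fix y assume y: "y \<in> Dg"
      have "\<phi> \<rho> p \<le> c - \<kappa>/2*(norm p)\<^sup>2 - (- (p \<bullet> y) - gr y)"
      proof (rule \<phi>least)
        fix x assume x: "x \<in> Df"
        show "p \<bullet> A x - fr x - \<rho>/2*(norm x)\<^sup>2 \<le> c - \<kappa>/2*(norm p)\<^sup>2 - (- (p \<bullet> y) - gr y)"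
          using bspec[OF bspec[OF H x] y] unfolding E_def by linarith
      qed
      thus "- (p \<bullet> y) - gr y \<le> c - \<kappa>/2*(norm p)\<^sup>2 - \<phi> \<rho> p" by linarith
    qed
    moreover obtain \<gamma> where "G p = ereal \<gamma>" using calculation Gnm[of p] by (cases "G p") auto
    ultimately show "\<Phi> p \<le> ereal c" unfolding Phi by simp
  qed
  have Elow: "ereal (E x y p) \<le> \<Phi> p" if x: "x \<in> Df" and y: "y \<in> Dg" for x y p
  proof -
    have "ereal (E x y p) = ereal (p \<bullet> A x - fr x - \<rho>/2*(norm x)\<^sup>2) + ereal (- (p \<bullet> y) - gr y) + ereal (\<kappa>/2*(norm p)\<^sup>2)"
      by (simp add: E_def)
    also have "\<dots> \<le> ereal (\<phi> \<rho> p) + G p + ereal (\<kappa>/2*(norm p)\<^sup>2)"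
      using \<phi>up[OF x, of p \<rho>] Gup[OF y, of p] by (intro add_mono) auto
    finally show ?thesis using Phi[of p] by simp
  qed
  have Phi_nm: "\<Phi> p \<noteq> -\<infinity>" for p using Elow[OF x0 y0, of p] by auto
  have Phi0: "\<Phi> 0 \<noteq> \<infinity>"
  proof -
    have "\<Phi> 0 = ereal (\<phi> \<rho> 0) + G 0" using Phi[of 0] by simp
    also have "\<dots> \<le> ereal (\<phi> \<rho> 0) + ereal (- cg)" using G0 by (intro add_mono) auto
    finally show ?thesis by auto
  qed
  define C where "C = norm (A x0 - y0)"
  define C0 where "C0 = fr x0 + \<rho>/2*(norm x0)\<^sup>2 + gr y0"
  have Elb1: "\<kappa>/2*(norm p)\<^sup>2 - C * norm p - C0 \<le> E x0 y0 p" for p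
  proof -
    have "(-p) \<bullet> (A x0 - y0) \<le> norm (-p) * norm (A x0 - y0)" by (rule norm_cauchy_schwarz)
    hence "- (C * norm p) \<le> p \<bullet> A x0 - p \<bullet> y0" unfolding C_def by (simp add: inner_diff_right mult.commute)
    thus ?thesis unfolding E_def C0_def by linarith
  qed
  define LB where "LB = - C\<^sup>2 / (2*\<kappa>) - C0"
  have Elb: "LB \<le> E x0 y0 p" for p
    using Elb1[of p] quad_lb[OF kappa_pos, of C "norm p"] unfolding LB_def by linarith
  define V where "V = {v. \<exists>p. \<Phi> p = ereal v}"
  have Vne: "V \<noteq> {}" using Phi0 Phi_nm[of 0] unfolding V_def by (cases "\<Phi> 0") auto
  have VLB: "LB \<le> v" if vV: "v \<in> V" for v
  proof -
    obtain p where "\<Phi> p = ereal v" using vV unfolding V_def by blast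
    thus ?thesis using Elow[OF x0 y0, of p] Elb[of p] by simp
  qed
  have Vbdd: "bdd_below V" using VLB by (intro bdd_belowI) auto
  define m where "m = Inf V"
  have mle: "ereal m \<le> \<Phi> q" for q
  proof (cases "\<Phi> q")
    case (real v)
    hence "v \<in> V" unfolding V_def by blast
    hence "m \<le> v" unfolding m_def using Vbdd by (intro cInf_lower)
    thus ?thesis using real by simp
  qed (use Phi_nm[of q] in auto)
  have exk: "\<exists>p. \<Phi> p \<le> ereal (m + 1 / (real k + 1))" for k
  proof -
    have "Inf V < m + 1 / (real k + 1)" unfolding m_def by simp
    then obtain v where v: "v \<in> V" "v < m + 1 / (real k + 1)" using cInf_lessD[OF Vne] by blast
    then obtain p where "\<Phi> p = ereal v" unfolding V_def by blast
    thus ?thesis using v(2) by (intro exI[of _ p]) simp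
  qed
  then obtain pk where pk: "\<And>k. \<Phi> (pk k) \<le> ereal (m + 1 / (real k + 1))" by metis
  have pkb: "norm (pk k) \<le> 1 + 2 * (C + \<bar>m + 1 + C0\<bar>) / \<kappa>" for k
  proof (rule quad_bd[OF kappa_pos])
    show "0 \<le> C" unfolding C_def by simp
    show "0 \<le> norm (pk k)" by simp
    have "E x0 y0 (pk k) \<le> m + 1 / (real k + 1)" using pk[of k] char x0 y0 by blast
    moreover have "1 / (real k + 1) \<le> 1" by simp
    ultimately show "\<kappa>/2*(norm (pk k))\<^sup>2 - C * norm (pk k) \<le> m + 1 + C0" using Elb1[of "pk k"] by linarith
  qed
  have "bounded (range pk)" unfolding bounded_iff using pkb by blast
  then obtain l \<sigma> where \<sigma>: "strict_mono \<sigma>" and lim: "(pk \<circ> \<sigma>) \<longlonglongrightarrow> l"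
    using bounded_imp_convergent_subsequence by blast
  have lim': "(\<lambda>k. pk (\<sigma> k)) \<longlonglongrightarrow> l" using lim by (simp add: o_def)
  have "\<Phi> l \<le> ereal m" unfolding char
  proof (intro ballI)
    fix x y assume x: "x \<in> Df" and y: "y \<in> Dg"
    have t1: "(\<lambda>k. E x y (pk (\<sigma> k))) \<longlonglongrightarrow> E x y l" unfolding E_def by (intro tendsto_intros lim')
    have "(\<lambda>k. m + 1 / (real k + 1)) \<longlonglongrightarrow> m + 0"
    proof (intro tendsto_intros)
      have "(\<lambda>k. inverse (real (Suc k))) \<longlonglongrightarrow> (0::real)" by (rule LIMSEQ_inverse_real_of_nat)
      thus "(\<lambda>k. 1 / (real k + 1)) \<longlonglongrightarrow> (0::real)" by (simp add: divide_inverse add.commute)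
    qed
    hence t2: "(\<lambda>k. m + 1 / (real k + 1)) \<longlonglongrightarrow> m" by simp
    show "E x y l \<le> m"
    proof (rule LIMSEQ_le[OF t1 t2], intro exI allI impI)
      fix k :: nat
      have "E x y (pk (\<sigma> k)) \<le> m + 1 / (real (\<sigma> k) + 1)" using pk[of "\<sigma> k"] char x y by blast
      also have "\<dots> \<le> m + 1 / (real k + 1)"
        using seq_suble[OF \<sigma>, of k] by (simp add: frac_le)
      finally show "E x y (pk (\<sigma> k)) \<le> m + 1 / (real k + 1)" .
    qed
  qed
  hence lmin: "is_minimizer \<Phi> l" unfolding is_minimizer_def using mle order_trans by blast
  have uniq: "p1 = p2" if p1: "is_minimizer \<Phi> p1" and p2: "is_minimizer \<Phi> p2" for p1 p2
  proof (rule ccontr)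
    assume ne: "p1 \<noteq> p2"
    obtain v1 where v1: "\<Phi> p1 = ereal v1"
      using p1[unfolded is_minimizer_def, rule_format, of 0] Phi0 Phi_nm[of p1] by (cases "\<Phi> p1") auto
    have v2: "\<Phi> p2 \<le> ereal v1" using p2 v1 unfolding is_minimizer_def by metis
    define d where "d = \<kappa>/8 * (norm (p1 - p2))\<^sup>2"
    have d: "0 < d" unfolding d_def using ne kappa_pos by simp
    define pm where "pm = (1/2) *\<^sub>R (p1 + p2)"
    have I: "pm \<bullet> v = (p1 \<bullet> v + p2 \<bullet> v) / 2" for v
      unfolding pm_def by (simp add: inner_add_left)
    have N: "(norm pm)\<^sup>2 = 1/2 * (norm p1)\<^sup>2 + (1 - 1/2) * (norm p2)\<^sup>2 - 1/2 * (1 - 1/2) * (norm (p1 - p2))\<^sup>2"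
    proof -
      have "pm = (1/2) *\<^sub>R p1 + (1 - 1/2) *\<^sub>R p2" unfolding pm_def by (simp add: scaleR_right_distrib)
      thus ?thesis using norm_convex_comb_sq[of "1/2" p1 p2] by simp
    qed
    have "\<Phi> pm \<le> ereal (v1 - d)" unfolding char
    proof (intro ballI)
      fix x y assume x: "x \<in> Df" and y: "y \<in> Dg"
      have e1: "E x y p1 \<le> v1" using v1 char x y by (metis order_refl)
      have e2: "E x y p2 \<le> v1" using v2 char x y by blast
      have ar: "\<kappa>/2 * (1/2 * X + (1 - 1/2) * Y - 1/2 * (1 - 1/2) * Z) = (\<kappa>/2*X + \<kappa>/2*Y)/2 - \<kappa>/8 * Z" for X Y Z :: real
        by (simp add: field_simps)
      have eq: "E x y pm = (E x y p1 + E x y p2) / 2 - d"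
        unfolding E_def I N ar d_def by (simp add: field_simps)
      have "E x y p1 + E x y p2 \<le> v1 + v1" using e1 e2 by (rule add_mono)
      hence "(E x y p1 + E x y p2) / 2 \<le> v1" by simp
      thus "E x y pm \<le> v1 - d" unfolding eq by simp
    qed
    also have "\<dots> < \<Phi> p1" using v1 d by simp
    also have "\<dots> \<le> \<Phi> pm" using p1 unfolding is_minimizer_def by blast
    finally show False by simp
  qed
  have ex1: "\<exists>!p. is_minimizer \<Phi> p" using lmin uniq by blast
  have Dx: "(norm x)\<^sup>2 / 2 \<le> Dconst f" if "x \<in> Df" for x
    unfolding Dconst_def
  proof (rule cSUP_upper)
    show "x \<in> edom f" using that unfolding Df_def .
    show "bdd_above ((\<lambda>x. (norm x)\<^sup>2 / 2) ` edom f)"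
    proof (rule bdd_aboveI[of _ "B\<^sup>2 / 2"])
      fix v assume "v \<in> (\<lambda>x. (norm x)\<^sup>2 / 2) ` edom f"
      then obtain z where z: "z \<in> Df" "v = (norm z)\<^sup>2 / 2" unfolding Df_def by blast
      have "(norm z)\<^sup>2 \<le> B\<^sup>2" using B[OF z(1)] by (intro power_mono) auto
      thus "v \<le> B\<^sup>2 / 2" using z(2) by simp
    qed
  qed
  have \<phi>12: "\<phi> \<rho> p \<le> \<phi> 0 p" for p
  proof (rule \<phi>least)
    fix x assume x: "x \<in> Df"
    have "p \<bullet> A x - fr x - 0/2*(norm x)\<^sup>2 \<le> \<phi> 0 p" by (rule \<phi>up[OF x])
    moreover have "0 \<le> \<rho>/2*(norm x)\<^sup>2" using rho_pos by simp
    ultimately show "p \<bullet> A x - fr x - \<rho>/2*(norm x)\<^sup>2 \<le> \<phi> 0 p" by simp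
  qed
  have \<phi>21: "\<phi> 0 p \<le> \<phi> \<rho> p + \<rho> * Dconst f" for p
  proof (rule \<phi>least)
    fix x assume x: "x \<in> Df"
    have "p \<bullet> A x - fr x - \<rho>/2*(norm x)\<^sup>2 \<le> \<phi> \<rho> p" by (rule \<phi>up[OF x])
    moreover have "\<rho> * ((norm x)\<^sup>2 / 2) \<le> \<rho> * Dconst f" using Dx[OF x] rho_pos by (intro mult_left_mono) auto
    ultimately show "p \<bullet> A x - fr x - 0/2*(norm x)\<^sup>2 \<le> \<phi> \<rho> p + \<rho> * Dconst f" by simp
  qed
  have bound: "(norm pDS)\<^sup>2 \<le> (norm ps)\<^sup>2 + 2 * \<rho> / \<kappa> * Dconst f"
    if pDS: "is_minimizer \<Phi> pDS" and ps: "is_minimizer (theta f g A) ps" for pDS ps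
  proof -
    have "\<Phi> pDS \<noteq> \<infinity>" using pDS[unfolded is_minimizer_def, rule_format, of 0] Phi0 by auto
    then obtain \<gamma>1 where g1: "G pDS = ereal \<gamma>1" using Phi[of pDS] Gnm[of pDS] by (cases "G pDS") auto
    have "theta f g A ps \<le> theta f g A pDS" using ps unfolding is_minimizer_def by blast
    hence hh: "ereal (\<phi> 0 ps) + G ps \<le> ereal (\<phi> 0 pDS + \<gamma>1)" unfolding Th g1 by simp
    then obtain \<gamma>2 where g2: "G ps = ereal \<gamma>2" using Gnm[of ps] by (cases "G ps") auto
    have h1: "\<phi> 0 ps + \<gamma>2 \<le> \<phi> 0 pDS + \<gamma>1"
      using hh unfolding g2 by simp
    have h2: "\<phi> \<rho> pDS + \<gamma>1 + \<kappa>/2*(norm pDS)\<^sup>2 \<le> \<phi> \<rho> ps + \<gamma>2 + \<kappa>/2*(norm ps)\<^sup>2"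
      using pDS[unfolded is_minimizer_def, rule_format, of ps] unfolding Phi g1 g2 by simp
    have "\<kappa>/2*(norm pDS)\<^sup>2 \<le> \<kappa>/2*(norm ps)\<^sup>2 + \<rho> * Dconst f"
      using h1 h2 \<phi>12[of ps] \<phi>21[of pDS] by linarith
    hence "\<kappa> * (norm pDS)\<^sup>2 \<le> \<kappa> * (norm ps)\<^sup>2 + 2 * \<rho> * Dconst f" by simp
    thus ?thesis using kappa_pos by (simp add: field_simps)
  qed
  show ?thesis
  proof (intro conjI allI impI)
    show "\<exists>!p. is_minimizer (theta_rho_kappa \<rho> \<kappa> f g A) p" using ex1 unfolding \<Phi>_def .
  next
    fix pDS ps assume "is_minimizer (theta_rho_kappa \<rho> \<kappa> f g A) pDS" "is_minimizer (theta f g A) ps"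
    thus "(norm pDS)\<^sup>2 \<le> (norm ps)\<^sup>2 + 2 * \<rho> / \<kappa> * Dconst f" using bound unfolding \<Phi>_def by blast
  next
    fix pDS ps R \<epsilon> assume pDS: "is_minimizer (theta_rho_kappa \<rho> \<kappa> f g A) pDS"
      and ps: "is_minimizer (theta f g A) ps" and R: "R > 0" "norm ps \<le> R" and D: "Dconst f > 0"
      and e: "\<epsilon> > 0" and rho: "\<rho> = \<epsilon> / (3 * Dconst f)" and kap: "\<kappa> = 2 * \<epsilon> / (3 * R\<^sup>2)"
    have b: "(norm pDS)\<^sup>2 \<le> (norm ps)\<^sup>2 + 2 * \<rho> / \<kappa> * Dconst f" using bound pDS ps unfolding \<Phi>_def by blast
    have "2 * \<rho> / \<kappa> * Dconst f = R\<^sup>2" unfolding rho kap using D e R(1) by (simp add: field_simps)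
    moreover have "(norm ps)\<^sup>2 \<le> R\<^sup>2" using R by (intro power_mono) auto
    ultimately have "(norm pDS)\<^sup>2 \<le> 2 * R\<^sup>2" using b by linarith
    hence "sqrt ((norm pDS)\<^sup>2) \<le> sqrt (2 * R\<^sup>2)" by (rule real_sqrt_le_mono)
    thus "norm pDS \<le> sqrt 2 * R" using R(1) by (simp add: real_sqrt_mult)
  qed
qed

end
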